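(* Let $m\ge 2$ be an integer, let $P_n^k\in\mathbb{R}^{m}$ be any fixed vector (linearization point), and let $i\in\{1,\dots,m\}$. For $P_n\in\mathbb{R}^m$ define the softmax component $R_{n,i}(P_n)=\exp(P_{n,i})/\sum_{j=1}^{m}\exp(P_{n,j})$ and $\mathrm{LSE}(P_n)=\ln\bigl(\sum_{j=1}^{m}\exp(P_{n,j})\bigr)$, and let $g^k=\exp(P_n^k)/\sum_{j=1}^m\exp(P^k_{n,j})\in\mathbb{R}^m$ (componentwise exponential). Define $$\overline{R}_{n,i}(P_n)=\exp\Bigl\{P_{n,i}-\mathrm{LSE}(P_n^k)-(g^k)^{\top}(P_n-P_n^k)\Bigr\},$$ $$\underline{R}_{n,i}(P_n)=1-\sum_{j\in\{1,\dots,m\}\setminus\{i\}}\exp(P_{n,j})\exp\Bigl\{-\mathrm{LSE}(P_n^k)-(g^k)^{\top}(P_n-P_n^k)\Bigr\}.$$ Let $\underline{r}_{n,i},\overline{r}_{n,i}\in\mathbb{R}$. Then the constraints $$\underline{r}_{n,i}\le \underline{R}_{n,i}(P_n),\qquad \overline{R}_{n,i}(P_n)\le \overline{r}_{n,i}$$ define a convex set of $P_n\in\mathbb{R}^m$; they are sufficient for $\underline{r}_{n,i}\le R_{n,i}(P_n)\le \overline{r}_{n,i}$; and they are necessary for $\underline{r}_{n,i}\le R_{n,i}(P_n^k)\le \overline{r}_{n,i}$, in the sense that if $\underline{r}_{n,i}\le R_{n,i}(P_n^k)\le \overline{r}_{n,i}$ then the constraints hold at $P_n=P_n^k$.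
   Context: Here $P_n$ is the $n$th row of a matrix $P\in\mathbb{R}^{m\times m}$ to which softmax is applied row-wise (in the paper $m=w+p$), and $P_n^k$ is the $n$th row of a linearization point $P^k$. *)

theory Defs
  imports "HOL-Analysis.Analysis"
begin

definition softmax_comp :: "real^'m \<Rightarrow> 'm \<Rightarrow> real" where
  "softmax_comp P i = exp (P $ i) / (\<Sum>j\<in>UNIV. exp (P $ j))"

definition LSE :: "real^'m \<Rightarrow> real" where
  "LSE P = ln (\<Sum>j\<in>UNIV. exp (P $ j))"

definition softmax_vec :: "real^'m \<Rightarrow> real^'m" where
  "softmax_vec Pk = (\<chi> j. exp (Pk $ j) / (\<Sum>l\<in>UNIV. exp (Pk $ l)))"

definition R_upper :: "real^'m \<Rightarrow> 'm \<Rightarrow> real^'m \<Rightarrow> real" where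
  "R_upper Pk i P = exp (P $ i - LSE Pk - softmax_vec Pk \<bullet> (P - Pk))"

definition R_lower :: "real^'m \<Rightarrow> 'm \<Rightarrow> real^'m \<Rightarrow> real" where
  "R_lower Pk i P = 1 - (\<Sum>j\<in>UNIV - {i}. exp (P $ j) * exp (- LSE Pk - softmax_vec Pk \<bullet> (P - Pk)))"

end

theory Submission
  imports Defs
begin

definition affA :: "real^'m \<Rightarrow> 'm \<Rightarrow> real^'m \<Rightarrow> real" where
  "affA Pk j P = P $ j - LSE Pk - softmax_vec Pk \<bullet> (P - Pk)"

lemma affA_comb:
  assumes "u + v = 1"
  shows "affA Pk j (u *\<^sub>R x + v *\<^sub>R y) = u * affA Pk j x + v * affA Pk j y"
proof -
  have "Pk = u *\<^sub>R Pk + v *\<^sub>R Pk" using assms by (metis scaleR_add_left scaleR_one)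
  then have "u *\<^sub>R x + v *\<^sub>R y - Pk = u *\<^sub>R (x - Pk) + v *\<^sub>R (y - Pk)"
    by (metis (no_types, lifting) add_diff_add scaleR_right_diff_distrib)
  moreover have "LSE Pk = u * LSE Pk + v * LSE Pk" using assms by (metis distrib_right mult_1)
  moreover have "softmax_vec Pk \<bullet> Pk = u * (softmax_vec Pk \<bullet> Pk) + v * (softmax_vec Pk \<bullet> Pk)"
    using assms by (metis distrib_right mult_1)
  ultimately show ?thesis unfolding affA_def
    by (simp add: inner_add_right algebra_simps)
qed

lemma exp_affA_convex:
  assumes "u \<ge> 0" "v \<ge> 0" "u + v = 1"
  shows "exp (affA Pk j (u *\<^sub>R x + v *\<^sub>R y)) \<le> u * exp (affA Pk j x) + v * exp (affA Pk j y)"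
  using affA_comb[OF assms(3)] exp_convex assms unfolding convex_on_def
  by (metis UNIV_I real_scaleR_def)

lemma R_upper_eq: "R_upper Pk i P = exp (affA Pk i P)"
  unfolding R_upper_def affA_def ..

lemma R_lower_eq: "R_lower Pk i P = 1 - (\<Sum>j\<in>UNIV - {i}. exp (affA Pk j P))"
  unfolding R_lower_def affA_def by (simp add: mult_exp_exp algebra_simps)

lemma sumexp_pos: "(\<Sum>j\<in>(UNIV::'m::finite set). exp ((P::real^'m) $ j)) > 0"
  by (intro sum_pos) auto

lemma lse_lin:
  fixes P Pk :: "real^'m"
  shows "exp (- LSE Pk - softmax_vec Pk \<bullet> (P - Pk)) \<ge> 1 / (\<Sum>j\<in>UNIV. exp (P $ j))"
proof -
  define S where "S = (\<Sum>j\<in>(UNIV::'m set). exp (Pk $ j))"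
  define g where "g = softmax_vec Pk"
  define d where "d = P - Pk"
  define c where "c = g \<bullet> d"
  have Spos: "S > 0" unfolding S_def by (rule sumexp_pos)
  have gj: "g $ j = exp (Pk $ j) / S" for j unfolding g_def softmax_vec_def S_def by simp
  have gsum: "(\<Sum>j\<in>UNIV. g $ j) = 1" using Spos
    by (simp add: gj sum_divide_distrib[symmetric] S_def)
  have c_eq: "c = (\<Sum>j\<in>UNIV. g $ j * d $ j)" unfolding c_def inner_vec_def by simp
  have "(\<Sum>j\<in>UNIV. g $ j * exp (d $ j - c)) \<ge> (\<Sum>j\<in>UNIV. g $ j * (1 + (d $ j - c)))"
    apply (rule sum_mono)
    apply (rule mult_left_mono)
     apply (rule exp_ge_add_one_self)
    using Spos by (simp add: gj)
  also have "(\<Sum>j\<in>UNIV. g $ j * (1 + (d $ j - c))) = (\<Sum>j\<in>UNIV. g $ j) + (\<Sum>j\<in>UNIV. g $ j * d $ j) - (\<Sum>j\<in>UNIV. g $ j) * c"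
    by (simp add: distrib_left right_diff_distrib sum.distrib sum_subtractf sum_distrib_right)
  also have "\<dots> = 1" using gsum c_eq by simp
  finally have h1: "1 \<le> (\<Sum>j\<in>UNIV. g $ j * exp (d $ j - c))" .
  have "(\<Sum>j\<in>UNIV. g $ j * exp (d $ j - c)) = (\<Sum>j\<in>UNIV. exp (P $ j)) / S * exp (- c)"
  proof -
    have "g $ j * exp (d $ j - c) = exp (P $ j) / S * exp (-c)" for j
      unfolding gj d_def using Spos by (simp add: exp_diff exp_minus field_simps mult_exp_exp[symmetric])
    then show ?thesis by (simp add: sum_divide_distrib sum_distrib_right)
  qed
  with h1 have "1 \<le> (\<Sum>j\<in>UNIV. exp (P $ j)) / S * exp (- c)" by simp
  moreover have "exp (- LSE Pk - softmax_vec Pk \<bullet> (P - Pk)) = exp (-c) / S"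
    unfolding LSE_def c_def g_def d_def S_def[symmetric] using Spos
    by (simp add: exp_diff exp_minus field_simps)
  ultimately have "1 \<le> (\<Sum>j\<in>UNIV. exp (P $ j)) * exp (- LSE Pk - softmax_vec Pk \<bullet> (P - Pk))"
    by (simp add: mult.commute)
  then show ?thesis using sumexp_pos[of P] by (simp add: field_simps)
qed

theorem theorem2:
  fixes Pk :: "real^'m" and i :: 'm and r_lo r_up :: real
  assumes "CARD('m) \<ge> 2"
  shows "convex {P :: real^'m. r_lo \<le> R_lower Pk i P \<and> R_upper Pk i P \<le> r_up}
    \<and> (\<forall>P :: real^'m. r_lo \<le> R_lower Pk i P \<and> R_upper Pk i P \<le> r_up
          \<longrightarrow> r_lo \<le> softmax_comp P i \<and> softmax_comp P i \<le> r_up)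
    \<and> (r_lo \<le> softmax_comp Pk i \<and> softmax_comp Pk i \<le> r_up
          \<longrightarrow> r_lo \<le> R_lower Pk i Pk \<and> R_upper Pk i Pk \<le> r_up)"
proof -
  define E where "E P = exp (- LSE Pk - softmax_vec Pk \<bullet> (P - Pk))" for P :: "real^'m"
  define S where "S P = (\<Sum>j\<in>(UNIV::'m set). exp (P $ j))" for P :: "real^'m"
  have Spos: "S P > 0" for P unfolding S_def by (rule sumexp_pos)
  have ES: "E P \<ge> 1 / S P" for P unfolding E_def S_def by (rule lse_lin)
  have Ssplit: "S P = exp (P $ i) + (\<Sum>j\<in>UNIV - {i}. exp (P $ j))" for P
    unfolding S_def by (simp add: sum.remove)
  have RU: "R_upper Pk i P = exp (P $ i) * E P" for P
    unfolding R_upper_def E_def by (simp add: exp_add[symmetric])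
  have RL: "R_lower Pk i P = 1 - (\<Sum>j\<in>UNIV - {i}. exp (P $ j)) * E P" for P
    unfolding R_lower_def E_def by (simp add: sum_distrib_right)
  have SM: "softmax_comp P i = exp (P $ i) / S P" for P
    unfolding softmax_comp_def S_def ..
  have SM2: "softmax_comp P i = 1 - (\<Sum>j\<in>UNIV - {i}. exp (P $ j)) / S P" for P
    using Spos[of P] Ssplit[of P] unfolding SM by (simp add: field_simps)
  have part2: "r_lo \<le> softmax_comp P i \<and> softmax_comp P i \<le> r_up"
    if h: "r_lo \<le> R_lower Pk i P \<and> R_upper Pk i P \<le> r_up" for P
  proof -
    have a: "(\<Sum>j\<in>UNIV - {i}. exp (P $ j)) / S P \<le> (\<Sum>j\<in>UNIV - {i}. exp (P $ j)) * E P"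
    proof -
      have "(\<Sum>j\<in>UNIV - {i}. exp (P $ j)) * (1 / S P) \<le> (\<Sum>j\<in>UNIV - {i}. exp (P $ j)) * E P"
        by (rule mult_left_mono[OF ES]) (simp add: sum_nonneg)
      then show ?thesis by simp
    qed
    have b: "exp (P $ i) / S P \<le> exp (P $ i) * E P"
    proof -
      have "exp (P $ i) * (1 / S P) \<le> exp (P $ i) * E P"
        by (rule mult_left_mono[OF ES]) simp
      then show ?thesis by simp
    qed
    show ?thesis using h a b unfolding RU RL SM2 by (auto simp: SM[symmetric] SM2)
  qed
  have EPk: "E Pk = 1 / S Pk"
    unfolding E_def LSE_def S_def using Spos[of Pk] by (simp add: exp_minus S_def inverse_eq_divide)
  have part3: "R_upper Pk i Pk = softmax_comp Pk i" "R_lower Pk i Pk = softmax_comp Pk i"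
    by (simp add: RU EPk SM) (simp add: RL EPk SM2)
  have part1: "convex {P :: real^'m. r_lo \<le> R_lower Pk i P \<and> R_upper Pk i P \<le> r_up}"
    unfolding convex_def
  proof (intro ballI allI impI)
    fix x y :: "real^'m" and u v :: real
    assume x: "x \<in> {P. r_lo \<le> R_lower Pk i P \<and> R_upper Pk i P \<le> r_up}"
      and y: "y \<in> {P. r_lo \<le> R_lower Pk i P \<and> R_upper Pk i P \<le> r_up}"
      and u: "0 \<le> u" and v: "0 \<le> v" and uv: "u + v = 1"
    have up: "R_upper Pk i (u *\<^sub>R x + v *\<^sub>R y) \<le> r_up"
    proof -
      have "R_upper Pk i (u *\<^sub>R x + v *\<^sub>R y) \<le> u * R_upper Pk i x + v * R_upper Pk i y"
        unfolding R_upper_eq by (rule exp_affA_convex[OF u v uv])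
      also have "\<dots> \<le> u * r_up + v * r_up"
        using x y u v by (intro add_mono mult_left_mono) auto
      finally show ?thesis using uv by (metis distrib_right mult_1)
    qed
    have lo: "r_lo \<le> R_lower Pk i (u *\<^sub>R x + v *\<^sub>R y)"
    proof -
      have "(\<Sum>j\<in>UNIV - {i}. exp (affA Pk j (u *\<^sub>R x + v *\<^sub>R y)))
          \<le> (\<Sum>j\<in>UNIV - {i}. u * exp (affA Pk j x) + v * exp (affA Pk j y))"
        by (rule sum_mono, rule exp_affA_convex[OF u v uv])
      also have "\<dots> = u * (\<Sum>j\<in>UNIV - {i}. exp (affA Pk j x)) + v * (\<Sum>j\<in>UNIV - {i}. exp (affA Pk j y))"
        by (simp add: sum.distrib sum_distrib_left)
      finally have "R_lower Pk i (u *\<^sub>R x + v *\<^sub>R y) \<ge> u * R_lower Pk i x + v * R_lower Pk i y"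
        unfolding R_lower_eq using uv by (simp add: algebra_simps)
      moreover have "u * R_lower Pk i x + v * R_lower Pk i y \<ge> u * r_lo + v * r_lo"
        using x y u v by (intro add_mono mult_left_mono) auto
      ultimately show ?thesis using uv by (metis distrib_right mult_1 order_trans)
    qed
    show "u *\<^sub>R x + v *\<^sub>R y \<in> {P. r_lo \<le> R_lower Pk i P \<and> R_upper Pk i P \<le> r_up}"
      using up lo by simp
  qed
  show ?thesis
  proof (intro conjI allI impI part1)
    fix P :: "real^'m"
    assume "r_lo \<le> R_lower Pk i P \<and> R_upper Pk i P \<le> r_up"
    from part2[OF this] show "r_lo \<le> softmax_comp P i" "softmax_comp P i \<le> r_up" by simp_all
  next
    assume "r_lo \<le> softmax_comp Pk i \<and> softmax_comp Pk i \<le> r_up"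
    then show "r_lo \<le> R_lower Pk i Pk" "R_upper Pk i Pk \<le> r_up" by (simp_all only: part3)
  qed
qed

end
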